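(* For $x,y\ge 1$ and $n>x+y$, the maximum possible number of edges in a task-dependency graph produced by the $(x,y)$ edge-removal process on $n$ vertices is $2n-x-y-2$.
   Context: A task-dependency graph is a finite directed acyclic graph (no loops, no multiple edges). A vertex is initial if it has in-degree $0$ and terminal if it has out-degree $0$ (an isolated vertex is both). The $(x,y)$ edge-removal process on $n$ vertices: start with the task-dependency graph on $\{1,\dots,n\}$ having all edges $(a,b)$ with $a<b$. Edges are removed uniformly at random, one at a time; a removal that would cause more than $x$ initial vertices or more than $y$ terminal vertices is cancelled. The process terminates when no further edge can be removed; the produced graph is the final graph (over all possible runs). *)

theory Defs
  imports Main
begin

definition initial_vertices :: "nat \<Rightarrow> (nat \<times> nat) set \<Rightarrow> nat set" where
  "initial_vertices n E = {v \<in> {1..n}. \<forall>u. (u, v) \<notin> E}"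

definition terminal_vertices :: "nat \<Rightarrow> (nat \<times> nat) set \<Rightarrow> nat set" where
  "terminal_vertices n E = {v \<in> {1..n}. \<forall>w. (v, w) \<notin> E}"

definition admissible :: "nat \<Rightarrow> nat \<Rightarrow> nat \<Rightarrow> (nat \<times> nat) set \<Rightarrow> bool" where
  "admissible x y n E \<longleftrightarrow>
     card (initial_vertices n E) \<le> x \<and> card (terminal_vertices n E) \<le> y"

definition full_dag :: "nat \<Rightarrow> (nat \<times> nat) set" where
  "full_dag n = {(a, b). 1 \<le> a \<and> a < b \<and> b \<le> n}"

text \<open>One successful (non-cancelled) removal step.\<close>
definition removal_step :: "nat \<Rightarrow> nat \<Rightarrow> nat \<Rightarrow> (nat \<times> nat) set \<Rightarrow> (nat \<times> nat) set \<Rightarrow> bool" where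
  "removal_step x y n E E' \<longleftrightarrow> (\<exists>e \<in> E. E' = E - {e} \<and> admissible x y n (E - {e}))"

definition final_graph :: "nat \<Rightarrow> nat \<Rightarrow> nat \<Rightarrow> (nat \<times> nat) set \<Rightarrow> bool" where
  "final_graph x y n E \<longleftrightarrow>
     (removal_step x y n)\<^sup>*\<^sup>* (full_dag n) E \<and> \<not> (\<exists>E'. removal_step x y n E E')"

end

theory Submission
  imports Defs
begin

lemma init_mono: "E \<subseteq> H \<Longrightarrow> initial_vertices n H \<subseteq> initial_vertices n E"
  by (auto simp: initial_vertices_def)

lemma term_mono: "E \<subseteq> H \<Longrightarrow> terminal_vertices n H \<subseteq> terminal_vertices n E"
  by (auto simp: terminal_vertices_def)

lemma fin_init: "finite (initial_vertices n E)"
  by (rule finite_subset[of _ "{1..n}"]) (auto simp: initial_vertices_def)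

lemma fin_term: "finite (terminal_vertices n E)"
  by (rule finite_subset[of _ "{1..n}"]) (auto simp: terminal_vertices_def)

lemma adm_mono: "admissible x y n E \<Longrightarrow> E \<subseteq> H \<Longrightarrow> admissible x y n H"
  unfolding admissible_def
  by (meson card_mono fin_init fin_term init_mono term_mono le_trans)

lemma full_adm:
  assumes "x \<ge> 1" "y \<ge> 1"
  shows "admissible x y n (full_dag n)"
proof -
  have "initial_vertices n (full_dag n) \<subseteq> {1}"
  proof
    fix v assume v: "v \<in> initial_vertices n (full_dag n)"
    show "v \<in> {1}"
    proof (rule ccontr)
      assume "v \<notin> {1}"
      with v have "(1, v) \<in> full_dag n" by (auto simp: initial_vertices_def full_dag_def)
      with v show False by (auto simp: initial_vertices_def)
    qed
  qed
  hence "card (initial_vertices n (full_dag n)) \<le> card {1::nat}"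
    by (intro card_mono) simp_all
  hence a: "card (initial_vertices n (full_dag n)) \<le> 1" by simp
  have "terminal_vertices n (full_dag n) \<subseteq> {n}"
  proof
    fix v assume v: "v \<in> terminal_vertices n (full_dag n)"
    show "v \<in> {n}"
    proof (rule ccontr)
      assume "v \<notin> {n}"
      with v have "(v, n) \<in> full_dag n" by (auto simp: terminal_vertices_def full_dag_def)
      with v show False by (auto simp: terminal_vertices_def)
    qed
  qed
  hence "card (terminal_vertices n (full_dag n)) \<le> card {n}"
    by (intro card_mono) simp_all
  hence b: "card (terminal_vertices n (full_dag n)) \<le> 1" by simp
  show ?thesis using a b assms by (simp add: admissible_def)
qed

lemma reach_inv:
  assumes "(removal_step x y n)\<^sup>*\<^sup>* (full_dag n) E" "x \<ge> 1" "y \<ge> 1"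
  shows "E \<subseteq> full_dag n \<and> admissible x y n E"
  using assms(1)
proof (induction rule: rtranclp_induct)
  case base
  then show ?case using full_adm assms by auto
next
  case (step E1 E2)
  then show ?case unfolding removal_step_def by auto
qed

lemma reach_build:
  assumes "finite D"
  shows "F \<inter> D = {} \<Longrightarrow> admissible x y n F \<Longrightarrow> (removal_step x y n)\<^sup>*\<^sup>* (F \<union> D) F"
  using assms
proof (induction D rule: finite_induct)
  case empty
  then show ?case by simp
next
  case (insert d D)
  have eq: "(F \<union> insert d D) - {d} = F \<union> D" using insert by auto
  have "removal_step x y n (F \<union> insert d D) (F \<union> D)"
    unfolding removal_step_def
    by (rule bexI[of _ d]) (use eq adm_mono[OF insert(5)] in auto)
  moreover have "(removal_step x y n)\<^sup>*\<^sup>* (F \<union> D) F" using insert by auto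
  ultimately show ?case by (rule converse_rtranclp_into_rtranclp)
qed

lemma final_edge:
  assumes adm: "admissible x y n E" and nad: "\<not> admissible x y n (E - {(a,b)})"
    and ab: "(a,b) \<in> E"
  shows "({a'. (a',b) \<in> E} = {a} \<and> card (initial_vertices n E) = x) \<or>
         ({b'. (a,b') \<in> E} = {b} \<and> card (terminal_vertices n E) = y)"
proof -
  have I1: "initial_vertices n (E - {(a,b)}) \<subseteq> insert b (initial_vertices n E)"
    by (auto simp: initial_vertices_def)
  have I2: "initial_vertices n (E - {(a,b)}) \<subseteq> initial_vertices n E"
    if "{a'. (a',b) \<in> E} \<noteq> {a}"
    using that ab by (auto simp: initial_vertices_def)
  have T1: "terminal_vertices n (E - {(a,b)}) \<subseteq> insert a (terminal_vertices n E)"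
    by (auto simp: terminal_vertices_def)
  have T2: "terminal_vertices n (E - {(a,b)}) \<subseteq> terminal_vertices n E"
    if "{b'. (a,b') \<in> E} \<noteq> {b}"
    using that ab by (auto simp: terminal_vertices_def)
  have cI1: "card (initial_vertices n (E - {(a,b)})) \<le> card (initial_vertices n E) + 1"
  proof -
    have "card (insert b (initial_vertices n E)) \<le> card (initial_vertices n E) + 1"
      by (simp add: card_insert_if fin_init)
    with card_mono[OF _ I1] show ?thesis using fin_init by (meson finite_insert le_trans)
  qed
  have cT1: "card (terminal_vertices n (E - {(a,b)})) \<le> card (terminal_vertices n E) + 1"
  proof -
    have "card (insert a (terminal_vertices n E)) \<le> card (terminal_vertices n E) + 1"
      by (simp add: card_insert_if fin_term)
    with card_mono[OF _ T1] show ?thesis using fin_term by (meson finite_insert le_trans)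
  qed
  from adm have ax: "card (initial_vertices n E) \<le> x" "card (terminal_vertices n E) \<le> y"
    by (auto simp: admissible_def)
  from nad have "card (initial_vertices n (E - {(a,b)})) > x \<or> card (terminal_vertices n (E - {(a,b)})) > y"
    by (auto simp: admissible_def)
  then show ?thesis
  proof
    assume h: "card (initial_vertices n (E - {(a,b)})) > x"
    have "{a'. (a',b) \<in> E} = {a}"
    proof (rule ccontr)
      assume "{a'. (a',b) \<in> E} \<noteq> {a}"
      from card_mono[OF fin_init I2[OF this]] h ax show False by linarith
    qed
    then show ?thesis using h ax cI1 by auto
  next
    assume h: "card (terminal_vertices n (E - {(a,b)})) > y"
    have "{b'. (a,b') \<in> E} = {b}"
    proof (rule ccontr)
      assume "{b'. (a,b') \<in> E} \<noteq> {b}"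
      from card_mono[OF fin_term T2[OF this]] h ax show False by linarith
    qed
    then show ?thesis using h ax cT1 by auto
  qed
qed

lemma bound:
  assumes x1: "x \<ge> 1" and y1: "y \<ge> 1" and nxy: "n > x + y" and fin: "final_graph x y n E"
  shows "card E \<le> 2 * n - x - y - 2"
proof -
  have reach: "(removal_step x y n)\<^sup>*\<^sup>* (full_dag n) E" using fin by (simp add: final_graph_def)
  have nostep: "\<And>e. e \<in> E \<Longrightarrow> \<not> admissible x y n (E - {e})"
    using fin unfolding final_graph_def removal_step_def by blast
  have sub: "E \<subseteq> full_dag n" and adm: "admissible x y n E" using reach_inv[OF reach x1 y1] by auto
  have finE: "finite E"
    by (rule finite_subset[OF sub], rule finite_subset[of _ "{1..n} \<times> {1..n}"]) (auto simp: full_dag_def)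
  define I where "I = initial_vertices n E"
  define T where "T = terminal_vertices n E"
  have edge: "\<And>a b. (a,b) \<in> E \<Longrightarrow> ({a'. (a',b) \<in> E} = {a} \<and> card I = x) \<or> ({b'. (a,b') \<in> E} = {b} \<and> card T = y)"
    using final_edge[OF adm nostep] unfolding I_def T_def by blast
  have lt: "\<And>a b. (a,b) \<in> E \<Longrightarrow> 1 \<le> a \<and> a < b \<and> b \<le> n" using sub by (auto simp: full_dag_def)
  have cI: "card I \<le> x" "card T \<le> y" using adm by (auto simp: admissible_def I_def T_def)
  consider (A) "card I = x" "card T = y" | (B) "card I < x" | (C) "card T < y" using cI by linarith
  then show ?thesis
  proof cases
    case B
    have o: "\<And>a b. (a,b) \<in> E \<Longrightarrow> {b'. (a,b') \<in> E} = {b}" using edge B by fastforce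
    have inj: "inj_on fst E"
    proof (rule inj_onI)
      fix p q assume "p \<in> E" "q \<in> E" "fst p = fst q"
      then show "p = q" using o by (metis (mono_tags, lifting) mem_Collect_eq prod.collapse singletonD)
    qed
    have "fst ` E \<subseteq> {1..<n}" using lt by force
    then have "card (fst ` E) \<le> card {1..<n}" by (intro card_mono) auto
    then have "card (fst ` E) \<le> n - 1" by simp
    then show ?thesis using card_image[OF inj] nxy by linarith
  next
    case C
    have o: "\<And>a b. (a,b) \<in> E \<Longrightarrow> {a'. (a',b) \<in> E} = {a}" using edge C by fastforce
    have inj: "inj_on snd E"
    proof (rule inj_onI)
      fix p q assume "p \<in> E" "q \<in> E" "snd p = snd q"
      then show "p = q" using o by (metis (mono_tags, lifting) mem_Collect_eq prod.collapse singletonD)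
    qed
    have "snd ` E \<subseteq> {Suc 1..n}" using lt by force
    then have "card (snd ` E) \<le> card {Suc 1..n}" by (intro card_mono) auto
    then have "card (snd ` E) \<le> n - 1" by simp
    then show ?thesis using card_image[OF inj] nxy by linarith
  next
    case A
    define ins where "ins = (\<lambda>b. {a'. (a',b) \<in> E})"
    define f where "f = (\<lambda>(a::nat,b::nat). if ins b = {a} then (b, False) else (a, True))"
    define S where "S = (({1..n} - I) \<times> {False}) \<union> (({1..n} - T) \<times> {True})"
    have edge2: "\<And>a b. (a,b) \<in> E \<Longrightarrow> ins b \<noteq> {a} \<Longrightarrow> {b'. (a,b') \<in> E} = {b}"
      using edge unfolding ins_def by blast
    have inj: "inj_on f E"
    proof (rule inj_onI)
      fix p q assume p: "p \<in> E" and q: "q \<in> E" and e: "f p = f q"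
      obtain a b where pab: "p = (a,b)" by force
      obtain a' b' where qab: "q = (a',b')" by force
      show "p = q"
      proof (cases "ins b = {a}")
        case True
        then show ?thesis using e unfolding pab qab f_def
          by (auto split: if_splits)
      next
        case False
        have h1: "{c. (a,c) \<in> E} = {b}" using edge2 p False pab by auto
        show ?thesis
        proof (cases "ins b' = {a'}")
          case True
          then show ?thesis using e False unfolding pab qab f_def by auto
        next
          case False2: False
          have h2: "{c. (a',c) \<in> E} = {b'}" using edge2 q False2 qab by auto
          have "a = a'" using e False False2 unfolding pab qab f_def by auto
          then show ?thesis using h1 h2 pab qab by auto
        qed
      qed
    qed
    have IS: "I \<subseteq> {1..n}" "T \<subseteq> {1..n}" by (auto simp: I_def T_def initial_vertices_def terminal_vertices_def)
    have finI: "finite I" "finite T" using IS finite_subset by auto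
    have cS: "card S = (n - x) + (n - y)"
    proof -
      have "card S = card (({1..n} - I) \<times> {False}) + card (({1..n} - T) \<times> {True})"
        unfolding S_def by (rule card_Un_disjoint) auto
      also have "\<dots> = card ({1..n} - I) + card ({1..n} - T)" by (simp add: card_cartesian_product)
      also have "\<dots> = (n - x) + (n - y)" using A IS finI by (simp add: card_Diff_subset)
      finally show ?thesis .
    qed
    have finS: "finite S" unfolding S_def by auto
    have fS: "f ` E \<subseteq> S"
    proof
      fix m assume "m \<in> f ` E"
      then obtain a b where ab: "(a,b) \<in> E" and m: "m = f (a,b)" by auto
      have "b \<notin> I" "a \<notin> T" using ab by (auto simp: I_def T_def initial_vertices_def terminal_vertices_def)
      then show "m \<in> S" using lt[OF ab] m unfolding f_def S_def by auto
    qed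
    have missF: "(p, False) \<notin> f ` E" if "\<And>c. ins p \<noteq> {c}" for p
    proof
      assume "(p, False) \<in> f ` E"
      then obtain a b where ab: "(a,b) \<in> E" and m: "(p, False) = f (a,b)" by auto
      then show False using that unfolding f_def by (auto split: if_splits)
    qed
    have missT: "(p, True) \<notin> f ` E" if "\<not> (\<exists>b. (p,b) \<in> E \<and> ins b \<noteq> {p})" for p
    proof
      assume "(p, True) \<in> f ` E"
      then obtain a b where ab: "(a,b) \<in> E" and m: "(p, True) = f (a,b)" by auto
      then show False using that unfolding f_def by (auto split: if_splits)
    qed
    have "card (I \<union> T) \<le> x + y" using A card_Un_le[of I T] by linarith
    moreover have "{1..n} \<subseteq> I \<union> T \<Longrightarrow> n \<le> card (I \<union> T)"
      using card_mono[of "I \<union> T" "{1..n}"] finI by simp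
    ultimately have "\<not> {1..n} \<subseteq> I \<union> T" using nxy by linarith
    then obtain v where v: "v \<in> {1..n}" "v \<notin> I" "v \<notin> T" by blast
    obtain u where uv: "(u,v) \<in> E" using v by (auto simp: I_def initial_vertices_def)
    obtain w where vw: "(v,w) \<in> E" using v by (auto simp: T_def terminal_vertices_def)
    have inS: "(b, False) \<in> S" "(a, True) \<in> S" if "(a,b) \<in> E" for a b
      using lt[OF that] that unfolding S_def by (auto simp: I_def T_def initial_vertices_def terminal_vertices_def)
    have "\<exists>m1 m2. m1 \<in> S \<and> m2 \<in> S \<and> m1 \<noteq> m2 \<and> m1 \<notin> f ` E \<and> m2 \<notin> f ` E"
    proof (cases "ins v = {u}")
      case True
      have m1: "(u, True) \<notin> f ` E"
      proof (rule missT, rule notI)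
        assume "\<exists>b. (u,b) \<in> E \<and> ins b \<noteq> {u}"
        then obtain b where b: "(u,b) \<in> E" "ins b \<noteq> {u}" by auto
        have "{c. (u,c) \<in> E} = {b}" using edge2 b by auto
        then have "b = v" using uv by auto
        then show False using b True by auto
      qed
      show ?thesis
      proof (cases "(v, True) \<in> f ` E")
        case False
        moreover have "u \<noteq> v" using lt[OF uv] by auto
        ultimately show ?thesis using m1 inS(2)[OF uv] inS(2)[OF vw] by blast
      next
        case True
        then obtain a b where ab: "(a,b) \<in> E" and m: "(v, True) = f (a,b)" by auto
        have "a = v" "ins b \<noteq> {v}" using m unfolding f_def by (auto split: if_splits)
        have vb: "v \<in> ins b" using ab \<open>a = v\<close> unfolding ins_def by auto
        have "(b, False) \<notin> f ` E"
          by (rule missF) (use vb \<open>ins b \<noteq> {v}\<close> in auto)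
        then show ?thesis using m1 inS(2)[OF uv] inS(1)[OF ab] by blast
      qed
    next
      case False
      have m1: "(v, False) \<notin> f ` E"
      proof (rule missF)
        fix c show "ins v \<noteq> {c}"
        proof
          assume h: "ins v = {c}"
          have "u \<in> ins v" using uv by (simp add: ins_def)
          then have "u = c" using h by auto
          then show False using h False by simp
        qed
      qed
      show ?thesis
      proof (cases "(v, True) \<in> f ` E")
        case False
        then show ?thesis using m1 inS(1)[OF uv] inS(2)[OF vw] by blast
      next
        case True
        then obtain a b where ab: "(a,b) \<in> E" and m: "(v, True) = f (a,b)" by auto
        have "a = v" "ins b \<noteq> {v}" using m unfolding f_def by (auto split: if_splits)
        have vb: "v \<in> ins b" using ab \<open>a = v\<close> unfolding ins_def by auto
        have "(b, False) \<notin> f ` E"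
          by (rule missF) (use vb \<open>ins b \<noteq> {v}\<close> in auto)
        moreover have "b \<noteq> v" using lt[OF ab] \<open>a = v\<close> by auto
        ultimately show ?thesis using m1 inS(1)[OF uv] inS(1)[OF ab] by blast
      qed
    qed
    then obtain m1 m2 where mm: "m1 \<in> S" "m2 \<in> S" "m1 \<noteq> m2" "m1 \<notin> f ` E" "m2 \<notin> f ` E" by blast
    have "f ` E \<subseteq> S - {m1, m2}" using fS mm by auto
    then have "card (f ` E) \<le> card (S - {m1, m2})" using finS by (simp add: card_mono)
    also have "\<dots> = card S - 2" using mm finS by (simp add: card_Diff_subset)
    finally show ?thesis using card_image[OF inj] cS nxy by linarith
  qed
qed

lemma construct:
  assumes x1: "x \<ge> 1" and y1: "y \<ge> 1" and nxy: "n > x + y"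
  defines "F \<equiv> (\<lambda>c. (1::nat, c)) ` {x+1..n-1} \<union> (\<lambda>c. (c, n)) ` {2..n-y}"
  shows "final_graph x y n F \<and> card F = 2 * n - x - y - 2"
proof -
  have memF: "(a,b) \<in> F \<longleftrightarrow> (a = 1 \<and> x+1 \<le> b \<and> b \<le> n-1) \<or> (b = n \<and> 2 \<le> a \<and> a \<le> n-y)" for a b
    unfolding F_def by auto
  have subF: "F \<subseteq> full_dag n"
  proof
    fix e assume "e \<in> F"
    then obtain a b where e: "e = (a,b)" "(a,b) \<in> F" by (cases e) auto
    then show "e \<in> full_dag n" using memF[of a b] nxy x1 y1 by (auto simp: full_dag_def)
  qed
  have IF: "initial_vertices n F \<subseteq> {1..x}"
  proof
    fix v assume v: "v \<in> initial_vertices n F"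
    then have v1: "1 \<le> v" "v \<le> n" and no: "\<And>u. (u,v) \<notin> F" by (auto simp: initial_vertices_def)
    show "v \<in> {1..x}"
    proof (rule ccontr)
      assume "v \<notin> {1..x}"
      then have "x < v" using v1 by auto
      show False
      proof (cases "v = n")
        case True
        then show False using no[of 2] memF[of 2 v] nxy x1 by auto
      next
        case False
        then show False using no[of 1] memF[of 1 v] \<open>x < v\<close> v1 by auto
      qed
    qed
  qed
  have TF: "terminal_vertices n F \<subseteq> {n-y+1..n}"
  proof
    fix v assume v: "v \<in> terminal_vertices n F"
    then have v1: "1 \<le> v" "v \<le> n" and no: "\<And>w. (v,w) \<notin> F" by (auto simp: terminal_vertices_def)
    show "v \<in> {n-y+1..n}"
    proof (rule ccontr)
      assume "v \<notin> {n-y+1..n}"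
      then have "v \<le> n - y" using v1 by auto
      show False
      proof (cases "v = 1")
        case True
        then show False using no[of "x+1"] memF[of v "x+1"] nxy y1 by auto
      next
        case False
        then show False using no[of n] memF[of v n] \<open>v \<le> n - y\<close> v1 by auto
      qed
    qed
  qed
  have admF: "admissible x y n F"
    unfolding admissible_def
    using card_mono[OF _ IF] card_mono[OF _ TF] by auto
  have reach: "(removal_step x y n)\<^sup>*\<^sup>* (full_dag n) F"
  proof -
    have finD: "finite (full_dag n - F)"
      by (rule finite_subset[of _ "{1..n} \<times> {1..n}"]) (auto simp: full_dag_def)
    have "F \<union> (full_dag n - F) = full_dag n" using subF by auto
    moreover have "F \<inter> (full_dag n - F) = {}" by blast
    ultimately show ?thesis using reach_build[OF finD, of F x y n] admF by simp
  qed
  have final: "\<not> admissible x y n (F - {e})" if e: "e \<in> F" for e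
  proof -
    obtain a b where ab: "e = (a,b)" by force
    have "(a = 1 \<and> x+1 \<le> b \<and> b \<le> n-1) \<or> (b = n \<and> 2 \<le> a \<and> a \<le> n-y)" using memF e ab by auto
    then show ?thesis
    proof
      assume h: "a = 1 \<and> x+1 \<le> b \<and> b \<le> n-1"
      have "insert b {1..x} \<subseteq> initial_vertices n (F - {e})"
      proof
        fix v assume v: "v \<in> insert b {1..x}"
        have "\<And>u. (u,v) \<notin> F - {e}"
        proof
          fix u assume "(u,v) \<in> F - {e}"
          then have "(u,v) \<in> F" "(u,v) \<noteq> (a,b)" using ab by auto
          then show False using memF[of u v] v h nxy by auto
        qed
        then show "v \<in> initial_vertices n (F - {e})" using v h nxy
          by (auto simp: initial_vertices_def)
      qed
      moreover have "card (insert b {1..x}) = x + 1" using h by simp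
      ultimately have "x + 1 \<le> card (initial_vertices n (F - {e}))"
        using card_mono[OF fin_init, of "insert b {1..x}" n "F - {e}"] by linarith
      then show ?thesis by (auto simp: admissible_def)
    next
      assume h: "b = n \<and> 2 \<le> a \<and> a \<le> n-y"
      have "insert a {n-y+1..n} \<subseteq> terminal_vertices n (F - {e})"
      proof
        fix v assume v: "v \<in> insert a {n-y+1..n}"
        have "\<And>w. (v,w) \<notin> F - {e}"
        proof
          fix w assume "(v,w) \<in> F - {e}"
          then have "(v,w) \<in> F" "(v,w) \<noteq> (a,b)" using ab by auto
          then show False using memF[of v w] v h nxy by auto
        qed
        then show "v \<in> terminal_vertices n (F - {e})" using v h nxy
          by (auto simp: terminal_vertices_def)
      qed
      moreover have "card (insert a {n-y+1..n}) = y + 1" using h nxy by simp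
      ultimately have "y + 1 \<le> card (terminal_vertices n (F - {e}))"
        using card_mono[OF fin_term, of "insert a {n-y+1..n}" n "F - {e}"] by linarith
      then show ?thesis by (auto simp: admissible_def)
    qed
  qed
  have "final_graph x y n F"
    unfolding final_graph_def
  proof (intro conjI notI)
    show "(removal_step x y n)\<^sup>*\<^sup>* (full_dag n) F" by (rule reach)
  next
    assume "\<exists>E'. removal_step x y n F E'"
    then obtain e where "e \<in> F" "admissible x y n (F - {e})"
      unfolding removal_step_def by blast
    then show False using final by blast
  qed
  moreover have "card F = 2 * n - x - y - 2"
  proof -
    have disj: "(\<lambda>c. (1::nat, c)) ` {x+1..n-1} \<inter> (\<lambda>c. (c, n)) ` {2..n-y} = {}" by auto
    have "card F = card ((\<lambda>c. (1::nat, c)) ` {x+1..n-1}) + card ((\<lambda>c. (c, n)) ` {2..n-y})"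
      unfolding F_def by (rule card_Un_disjoint[OF finite_imageI finite_imageI disj]) simp_all
    also have "card ((\<lambda>c. (1::nat, c)) ` {x+1..n-1}) = card {x+1..n-1}"
      by (rule card_image) (simp add: inj_on_def)
    also have "card ((\<lambda>c. (c, n)) ` {2..n-y}) = card {2..n-y}"
      by (rule card_image) (simp add: inj_on_def)
    also have "card {x+1..n-1} + card {2..n-y} = 2 * n - x - y - 2"
      using nxy by simp
    finally show ?thesis .
  qed
  ultimately show ?thesis by (rule conjI)
qed

theorem mainTheorem7:
  fixes x y n :: nat
  assumes "x \<ge> 1" and "y \<ge> 1" and "n > x + y"
  shows "(\<exists>E. final_graph x y n E \<and> card E = 2 * n - x - y - 2) \<and>
         (\<forall>E. final_graph x y n E \<longrightarrow> card E \<le> 2 * n - x - y - 2)"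
proof (intro conjI allI impI)
  show "\<exists>E. final_graph x y n E \<and> card E = 2 * n - x - y - 2"
    using construct[OF assms] by (rule exI)
next
  fix E assume "final_graph x y n E"
  then show "card E \<le> 2 * n - x - y - 2" by (rule bound[OF assms])
qed

end
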